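(* In a CDec-POMDP with a homogeneous policy $\pi$ (as described in the context), let $f_w$ have the form $f_w(\mathbf{s}_t,\mathbf{a}_t)=\sum_{i\in S,j\in A}n_t(i,j)\,f_w\big(i,j,o(i,\mathbf{n}_{\mathbf{s}_t})\big)$. Then the approximate policy gradient $\sum_{t=1}^H\mathbb{E}_{\mathbf{s}_t,\mathbf{a}_t}\big[f_w(\mathbf{s}_t,\mathbf{a}_t)\nabla_\theta\log P(\mathbf{a}_t\mid\mathbf{s}_t)\big]$ equals $$\mathbb{E}_{\mathbf{n}_{1:H}\sim P(\cdot;\pi)}\Big[\sum_{t=1}^H\sum_{i\in S,j\in A}n_t(i,j)\,\nabla_\theta\log\pi\big(j\mid i,o(i,\mathbf{n}_t)\big)\,f_w\big(i,j,o(i,\mathbf{n}_t)\big)\Big],$$ where the expectation is over count-table sequences $\mathbf{n}_{1:H}$ (taking values in the set $\Omega_{1:H}$ of consistent count tables).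
   Context: CDec-POMDP: $M$ agents, finite local state space $S$, finite action set $A$, horizon $H$; at time $t$ agent $m$ is in state $s^m_t$ and takes action $a^m_t$. Counts: $n_t(i)=|\{m:s^m_t=i\}|$, $n_t(i,j)=|\{m:(s^m_t,a^m_t)=(i,j)\}|$, $n_t(i,j,i')=|\{m:(s^m_t,a^m_t,s^m_{t+1})=(i,j,i')\}|$; $\mathbf{n}_t=\mathbf{n}_{\mathbf{s}_t}=(n_t(i))_{i\in S}$. Initial local states are i.i.d. from $b_o$; given $\mathbf{s}_t$, all agents independently act according to a common policy $\pi_t(j\mid i,o(i,\mathbf{n}_{\mathbf{s}_t}))$ (differentiable in parameter $\theta$, positive probabilities; $o$ a fixed observation function), so $P(\mathbf{a}_t\mid\mathbf{s}_t)=\prod_m\pi_t(a^m_t\mid s^m_t,o(s^m_t,\mathbf{n}_{\mathbf{s}_t}))$; each agent then independently transitions with probability $\phi_t(i'\mid i,j,\mathbf{n}_{\mathbf{s}_t})$. $P(\mathbf{n}_{1:H};\pi)$ denotes the distribution of the sequence of count tables $\mathbf{n}_{1:H}=\{(n_t(i)),(n_t(i,j)),(n_t(i,j,i'))\}_{t=1}^H$ induced by the joint trajectory of all agents under this process. $\Omega_{1:H}$ is the set of count tables with $\sum_i n_t(i)=M$, $\sum_j n_t(i,j)=n_t(i)$, $\sum_{i'}n_t(i,j,i')=n_t(i,j)$ for all $i,j,t$. The function $f_w(i,j,o)$ does not depend on $\theta$; $\mathbb{E}_{\mathbf{s}_t,\mathbf{a}_t}$ is over the marginal of $(\mathbf{s}_t,\mathbf{a}_t)$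 under the process. *)

theory Defs
  imports "HOL-Analysis.Analysis"
begin

definition grad :: "('p::euclidean_space \<Rightarrow> real) \<Rightarrow> 'p \<Rightarrow> 'p" where
  "grad f x = (THE D. GDERIV f x :> D)"

(* Agents are the elements of the finite type 'm (so M = CARD('m)).
   A joint state is s :: 'm \<Rightarrow> 's, a joint action is a :: 'm \<Rightarrow> 'a. *)
definition cnt1 :: "('m::finite \<Rightarrow> 's) \<Rightarrow> 's \<Rightarrow> nat" where
  "cnt1 s i = card {m. s m = i}"

definition cnt2 :: "('m::finite \<Rightarrow> 's) \<Rightarrow> ('m \<Rightarrow> 'a) \<Rightarrow> 's \<Rightarrow> 'a \<Rightarrow> nat" where
  "cnt2 s a i j = card {m. s m = i \<and> a m = j}"

definition cnt3 :: "('m::finite \<Rightarrow> 's) \<Rightarrow> ('m \<Rightarrow> 'a) \<Rightarrow> ('m \<Rightarrow> 's) \<Rightarrow> 's \<Rightarrow> 'a \<Rightarrow> 's \<Rightarrow> nat" where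
  "cnt3 s a s' i j i' = card {m. s m = i \<and> a m = j \<and> s' m = i'}"

definition trajs :: "nat \<Rightarrow> ((nat \<Rightarrow> 'm \<Rightarrow> 's) \<times> (nat \<Rightarrow> 'm \<Rightarrow> 'a)) set" where
  "trajs H = (Pi\<^sub>E {1..Suc H} (\<lambda>_. UNIV)) \<times> (Pi\<^sub>E {1..H} (\<lambda>_. UNIV))"

(* Probability of the joint action given the joint state, P(a_t | s_t):
   pol \<theta> t i o j = \<pi>_t(j | i, o), obs i n = o(i, n). *)
definition jointpol ::
  "('p \<Rightarrow> nat \<Rightarrow> 's \<Rightarrow> 'o \<Rightarrow> 'a \<Rightarrow> real) \<Rightarrow> ('s \<Rightarrow> ('s \<Rightarrow> nat) \<Rightarrow> 'o) \<Rightarrow>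
   'p \<Rightarrow> nat \<Rightarrow> ('m::finite \<Rightarrow> 's) \<Rightarrow> ('m \<Rightarrow> 'a) \<Rightarrow> real" where
  "jointpol pol obs \<theta> t s a = (\<Prod>m\<in>UNIV. pol \<theta> t (s m) (obs (s m) (cnt1 s)) (a m))"

(* Probability of a joint trajectory under the process;
   phi t i j n i' = \<phi>_t(i' | i, j, n). *)
definition trajprob ::
  "nat \<Rightarrow> ('s \<Rightarrow> real) \<Rightarrow> ('p \<Rightarrow> nat \<Rightarrow> 's \<Rightarrow> 'o \<Rightarrow> 'a \<Rightarrow> real) \<Rightarrow> ('s \<Rightarrow> ('s \<Rightarrow> nat) \<Rightarrow> 'o) \<Rightarrow>
   (nat \<Rightarrow> 's \<Rightarrow> 'a \<Rightarrow> ('s \<Rightarrow> nat) \<Rightarrow> 's \<Rightarrow> real) \<Rightarrow> 'p \<Rightarrow>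
   (nat \<Rightarrow> 'm::finite \<Rightarrow> 's) \<times> (nat \<Rightarrow> 'm \<Rightarrow> 'a) \<Rightarrow> real" where
  "trajprob H b0 pol obs phi \<theta> sa =
     (let s = fst sa; a = snd sa in
      (\<Prod>m\<in>UNIV. b0 (s 1 m)) *
      (\<Prod>t\<in>{1..H}. jointpol pol obs \<theta> t (s t) (a t) *
                    (\<Prod>m\<in>UNIV. phi t (s t m) (a t m) (cnt1 (s t)) (s (Suc t) m))))"

definition margprob ::
  "nat \<Rightarrow> ('s \<Rightarrow> real) \<Rightarrow> ('p \<Rightarrow> nat \<Rightarrow> 's \<Rightarrow> 'o \<Rightarrow> 'a \<Rightarrow> real) \<Rightarrow> ('s \<Rightarrow> ('s \<Rightarrow> nat) \<Rightarrow> 'o) \<Rightarrow>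
   (nat \<Rightarrow> 's \<Rightarrow> 'a \<Rightarrow> ('s \<Rightarrow> nat) \<Rightarrow> 's \<Rightarrow> real) \<Rightarrow> 'p \<Rightarrow> nat \<Rightarrow>
   ('m::finite \<Rightarrow> 's) \<Rightarrow> ('m \<Rightarrow> 'a) \<Rightarrow> real" where
  "margprob H b0 pol obs phi \<theta> t x y =
     (\<Sum>sa\<in>{sa\<in>trajs H. fst sa t = x \<and> snd sa t = y}. trajprob H b0 pol obs phi \<theta> sa)"

(* Count tables at one time step: (n_t(i)), (n_t(i,j)), (n_t(i,j,i')). *)
type_synonym ('s,'a) ctab = "('s \<Rightarrow> nat) \<times> ('s \<Rightarrow> 'a \<Rightarrow> nat) \<times> ('s \<Rightarrow> 'a \<Rightarrow> 's \<Rightarrow> nat)"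

definition zero_ctab :: "('s,'a) ctab" where
  "zero_ctab = ((\<lambda>_. 0), (\<lambda>_ _. 0), (\<lambda>_ _ _. 0))"

definition counts :: "nat \<Rightarrow> (nat \<Rightarrow> 'm::finite \<Rightarrow> 's) \<times> (nat \<Rightarrow> 'm \<Rightarrow> 'a) \<Rightarrow> nat \<Rightarrow> ('s,'a) ctab" where
  "counts H sa t =
     (if t \<in> {1..H}
      then (cnt1 (fst sa t), cnt2 (fst sa t) (snd sa t), cnt3 (fst sa t) (snd sa t) (fst sa (Suc t)))
      else zero_ctab)"

definition Omega :: "nat \<Rightarrow> nat \<Rightarrow> (nat \<Rightarrow> ('s::finite,'a::finite) ctab) set" where
  "Omega M H = {N. (\<forall>t\<in>{1..H}.
        (\<Sum>i\<in>UNIV. fst (N t) i) = M \<and>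
        (\<forall>i. (\<Sum>j\<in>UNIV. fst (snd (N t)) i j) = fst (N t) i) \<and>
        (\<forall>i j. (\<Sum>i'\<in>UNIV. snd (snd (N t)) i j i') = fst (snd (N t)) i j)) \<and>
      (\<forall>t. t \<notin> {1..H} \<longrightarrow> N t = zero_ctab)}"

definition countprob ::
  "nat \<Rightarrow> ('s \<Rightarrow> real) \<Rightarrow> ('p \<Rightarrow> nat \<Rightarrow> 's \<Rightarrow> 'o \<Rightarrow> 'a \<Rightarrow> real) \<Rightarrow> ('s \<Rightarrow> ('s \<Rightarrow> nat) \<Rightarrow> 'o) \<Rightarrow>
   (nat \<Rightarrow> 's \<Rightarrow> 'a \<Rightarrow> ('s \<Rightarrow> nat) \<Rightarrow> 's \<Rightarrow> real) \<Rightarrow> 'p \<Rightarrow> 'm::finite itself \<Rightarrow>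
   (nat \<Rightarrow> ('s,'a) ctab) \<Rightarrow> real" where
  "countprob H b0 pol obs phi \<theta> _ N =
     (\<Sum>sa\<in>{sa\<in>(trajs H :: ((nat \<Rightarrow> 'm \<Rightarrow> 's) \<times> (nat \<Rightarrow> 'm \<Rightarrow> 'a)) set). counts H sa = N}.
        trajprob H b0 pol obs phi \<theta> sa)"

end

theory Submission
  imports Defs
begin

lemma gderiv_unique:
  assumes "GDERIV f x :> D" "GDERIV f x :> E" shows "D = E"
proof -
  have "(\<lambda>h. inner h D) = (\<lambda>h. inner h E)"
    using assms unfolding gderiv_def by (rule has_derivative_unique)
  then have "inner (D - E) D = inner (D - E) E" by metis
  then have "inner (D - E) (D - E) = 0" by (simp add: inner_diff_right)
  then show ?thesis by simp
qed

lemma grad_eq: assumes "GDERIV f x :> D" shows "grad f x = D"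
  unfolding grad_def using assms gderiv_unique by blast

lemma diff_gderiv:
  fixes f :: "'p::euclidean_space \<Rightarrow> real"
  assumes "f differentiable (at x)" shows "\<exists>D. GDERIV f x :> D"
proof -
  obtain f' where f': "(f has_derivative f') (at x)" using assms differentiable_def by blast
  then have lin: "linear f'" using has_derivative_linear by blast
  define D where "D = (\<Sum>b\<in>Basis. f' b *\<^sub>R b)"
  have "f' h = inner h D" for h
  proof -
    have "f' h = f' (\<Sum>b\<in>Basis. inner h b *\<^sub>R b)" by (simp add: euclidean_representation)
    also have "\<dots> = (\<Sum>b\<in>Basis. inner h b * f' b)"
      using lin by (simp add: linear_sum linear_scale)
    also have "\<dots> = inner h D" unfolding D_def by (simp add: inner_sum_right mult.commute)
    finally show ?thesis .
  qed
  then have "f' = (\<lambda>h. inner h D)" by auto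
  then show ?thesis using f' unfolding gderiv_def by blast
qed

lemma gderiv_grad:
  fixes f :: "'p::euclidean_space \<Rightarrow> real"
  assumes "f differentiable (at x)" shows "GDERIV f x :> grad f x"
  using diff_gderiv[OF assms] grad_eq by metis

lemma gderiv_sum:
  assumes "\<And>i. i \<in> I \<Longrightarrow> GDERIV (f i) x :> D i"
  shows "GDERIV (\<lambda>y. \<Sum>i\<in>I. f i y) x :> (\<Sum>i\<in>I. D i)"
proof -
  have "((\<lambda>y. \<Sum>i\<in>I. f i y) has_derivative (\<lambda>h. \<Sum>i\<in>I. inner h (D i))) (at x)"
    using assms unfolding gderiv_def by (intro has_derivative_sum) auto
  then show ?thesis unfolding gderiv_def by (simp add: inner_sum_right)
qed

lemma gderiv_ln:
  assumes "GDERIV f x :> D" "f x > 0"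
  shows "GDERIV (\<lambda>y. ln (f y)) x :> (1 / f x) *\<^sub>R D"
  using GDERIV_DERIV_compose[OF assms(1) DERIV_ln[OF assms(2)]] by (simp add: divide_inverse)

lemma score_zero:
  fixes p :: "'a::finite \<Rightarrow> 'p::euclidean_space \<Rightarrow> real"
  assumes pos: "\<And>j \<eta>. p j \<eta> > 0" and s1: "\<And>\<eta>. (\<Sum>j\<in>UNIV. p j \<eta>) = 1"
    and d: "\<And>j. p j differentiable (at \<theta>)"
  shows "(\<Sum>j\<in>UNIV. p j \<theta> *\<^sub>R grad (\<lambda>\<eta>. ln (p j \<eta>)) \<theta>) = 0"
proof -
  have g: "GDERIV (p j) \<theta> :> grad (p j) \<theta>" for j using gderiv_grad[OF d] .
  have "grad (\<lambda>\<eta>. ln (p j \<eta>)) \<theta> = (1 / p j \<theta>) *\<^sub>R grad (p j) \<theta>" for j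
    by (rule grad_eq, rule gderiv_ln[OF g pos])
  then have e: "p j \<theta> *\<^sub>R grad (\<lambda>\<eta>. ln (p j \<eta>)) \<theta> = grad (p j) \<theta>" for j
    using pos[of j \<theta>] by simp
  have "GDERIV (\<lambda>\<eta>. \<Sum>j\<in>UNIV. p j \<eta>) \<theta> :> (\<Sum>j\<in>UNIV. grad (p j) \<theta>)"
    by (rule gderiv_sum) (use g in auto)
  moreover have "GDERIV (\<lambda>\<eta>. \<Sum>j\<in>UNIV. p j \<eta>) \<theta> :> 0"
    unfolding s1 by (rule GDERIV_const)
  ultimately have "(\<Sum>j\<in>UNIV. grad (p j) \<theta>) = 0" by (rule gderiv_unique)
  then show ?thesis by (simp add: e)
qed

lemma grad_ln_prod:
  fixes p :: "'m::finite \<Rightarrow> 'p::euclidean_space \<Rightarrow> real"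
  assumes pos: "\<And>m \<eta>. p m \<eta> > 0" and d: "\<And>m. p m differentiable (at \<theta>)"
  shows "grad (\<lambda>\<eta>. ln (\<Prod>m\<in>UNIV. p m \<eta>)) \<theta> = (\<Sum>m\<in>UNIV. grad (\<lambda>\<eta>. ln (p m \<eta>)) \<theta>)"
proof -
  have eq: "(\<lambda>\<eta>. ln (\<Prod>m\<in>UNIV. p m \<eta>)) = (\<lambda>\<eta>. \<Sum>m\<in>UNIV. ln (p m \<eta>))"
    using pos by (simp add: ln_prod less_imp_neq[symmetric])
  have g: "GDERIV (\<lambda>\<eta>. ln (p m \<eta>)) \<theta> :> grad (\<lambda>\<eta>. ln (p m \<eta>)) \<theta>" for m
    using gderiv_ln[OF gderiv_grad[OF d] pos] grad_eq by metis
  show ?thesis unfolding eq by (rule grad_eq, rule gderiv_sum) (use g in auto)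
qed

lemma count_sum:
  fixes x :: "'m::finite \<Rightarrow> 's::finite" and y :: "'m \<Rightarrow> 'a::finite"
    and h :: "'s \<Rightarrow> 'a \<Rightarrow> 'v::real_vector"
  shows "(\<Sum>i\<in>UNIV. \<Sum>j\<in>UNIV. real (cnt2 x y i j) *\<^sub>R h i j) = (\<Sum>m\<in>UNIV. h (x m) (y m))"
proof -
  have "(\<Sum>m\<in>UNIV. h (x m) (y m)) = (\<Sum>m\<in>UNIV. \<Sum>i\<in>UNIV. \<Sum>j\<in>UNIV. (if x m = i \<and> y m = j then h i j else 0))"
  proof (rule sum.cong[OF refl])
    fix m
    have "(\<Sum>i\<in>UNIV. \<Sum>j\<in>UNIV. (if x m = i \<and> y m = j then h i j else 0))
       = (\<Sum>i\<in>UNIV. if x m = i then (\<Sum>j\<in>UNIV. if y m = j then h i j else 0) else 0)"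
      by (intro sum.cong refl) auto
    also have "\<dots> = h (x m) (y m)" by (simp add: sum.delta)
    finally show "h (x m) (y m) = (\<Sum>i\<in>UNIV. \<Sum>j\<in>UNIV. (if x m = i \<and> y m = j then h i j else 0))" ..
  qed
  also have "\<dots> = (\<Sum>i\<in>UNIV. \<Sum>j\<in>UNIV. \<Sum>m\<in>UNIV. (if x m = i \<and> y m = j then h i j else 0))"
    by (simp add: sum.swap[of _ "UNIV::'m set"])
  also have "\<dots> = (\<Sum>i\<in>UNIV. \<Sum>j\<in>UNIV. real (cnt2 x y i j) *\<^sub>R h i j)"
    by (simp add: sum.If_cases cnt2_def sum_constant_scaleR)
  finally show ?thesis ..
qed

lemma cross:
  fixes p :: "'m::finite \<Rightarrow> 'a::finite \<Rightarrow> real" and A :: "'a \<Rightarrow> real"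
    and B :: "'a \<Rightarrow> 'v::euclidean_space"
  assumes ne: "m \<noteq> m'" and z: "(\<Sum>j\<in>UNIV. p m' j *\<^sub>R B j) = 0"
  shows "(\<Sum>y\<in>UNIV. (\<Prod>k\<in>UNIV. p k (y k)) *\<^sub>R (A (y m) *\<^sub>R B (y m'))) = 0"
proof (rule euclidean_eqI)
  fix b :: 'v assume "b \<in> Basis"
  define h where "h k j = p k j * (if k = m then A j else 1) * (if k = m' then inner (B j) b else 1)" for k j
  have hp: "(\<Prod>k\<in>UNIV. h k (y k)) = (\<Prod>k\<in>UNIV. p k (y k)) * A (y m) * inner (B (y m')) b" for y
    unfolding h_def prod.distrib by (simp add: prod.delta)
  have "inner (\<Sum>y\<in>UNIV. (\<Prod>k\<in>UNIV. p k (y k)) *\<^sub>R (A (y m) *\<^sub>R B (y m'))) b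
      = (\<Sum>y\<in>UNIV. \<Prod>k\<in>UNIV. h k (y k))"
    by (simp add: inner_sum_left hp mult.assoc)
  also have "\<dots> = (\<Prod>k\<in>UNIV. \<Sum>j\<in>UNIV. h k j)"
    using prod_sum_PiE[of "UNIV::'m set" "\<lambda>_. UNIV::'a set" h] by simp
  also have "\<dots> = 0"
  proof (rule prod_zero)
    have "(\<Sum>j\<in>UNIV. h m' j) = inner (\<Sum>j\<in>UNIV. p m' j *\<^sub>R B j) b"
      using ne by (simp add: h_def inner_sum_left)
    also have "\<dots> = 0" using z by simp
    finally show "\<exists>k\<in>UNIV. (\<Sum>j\<in>UNIV. h k j) = 0" by blast
  qed simp
  finally show "inner (\<Sum>y\<in>UNIV. (\<Prod>k\<in>UNIV. p k (y k)) *\<^sub>R (A (y m) *\<^sub>R B (y m'))) b = inner 0 b"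
    by simp
qed

lemma local_eq:
  fixes pol :: "'p::euclidean_space \<Rightarrow> nat \<Rightarrow> 's::finite \<Rightarrow> 'o \<Rightarrow> 'a::finite \<Rightarrow> real"
    and x :: "'m::finite \<Rightarrow> 's"
  assumes pol_pos: "\<And>\<theta>' t i ob j. pol \<theta>' t i ob j > 0"
    and pol_sum: "\<And>\<theta>' t i ob. (\<Sum>j\<in>UNIV. pol \<theta>' t i ob j) = 1"
    and pol_diff: "\<And>\<theta>' t i ob j. (\<lambda>\<eta>. pol \<eta> t i ob j) differentiable (at \<theta>')"
  shows "(\<Sum>y\<in>UNIV. jointpol pol obs \<theta> t x y *\<^sub>R
          ((\<Sum>i\<in>UNIV. \<Sum>j\<in>UNIV. real (cnt2 x y i j) * fw i j (obs i (cnt1 x))) *\<^sub>R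
             grad (\<lambda>\<eta>. ln (jointpol pol obs \<eta> t x y)) \<theta>))
   = (\<Sum>y\<in>UNIV. jointpol pol obs \<theta> t x y *\<^sub>R
        (\<Sum>i\<in>UNIV. \<Sum>j\<in>UNIV.
             (real (cnt2 x y i j) * fw i j (obs i (cnt1 x))) *\<^sub>R
               grad (\<lambda>\<eta>. ln (pol \<eta> t i (obs i (cnt1 x)) j)) \<theta>))"
proof -
  define o' where "o' k = obs (x k) (cnt1 x)" for k
  define fm where "fm y m = fw (x m) (y m) (o' m)" for y :: "'m \<Rightarrow> 'a" and m
  define gm where "gm y m = grad (\<lambda>\<eta>. ln (pol \<eta> t (x m) (o' m) (y m))) \<theta>" for y :: "'m \<Rightarrow> 'a" and m
  define jp where "jp y = (\<Prod>k\<in>UNIV. pol \<theta> t (x k) (o' k) (y k))" for y :: "'m \<Rightarrow> 'a"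
  have jpe: "jointpol pol obs \<theta> t x y = jp y" for y
    unfolding jointpol_def jp_def o'_def ..
  have F: "(\<Sum>i\<in>UNIV. \<Sum>j\<in>UNIV. real (cnt2 x y i j) * fw i j (obs i (cnt1 x))) = (\<Sum>m\<in>UNIV. fm y m)" for y
    using count_sum[of x y "\<lambda>i j. fw i j (obs i (cnt1 x))"] by (simp add: fm_def o'_def)
  have Gr: "grad (\<lambda>\<eta>. ln (jointpol pol obs \<eta> t x y)) \<theta> = (\<Sum>m\<in>UNIV. gm y m)" for y
    unfolding jointpol_def gm_def o'_def
    by (rule grad_ln_prod) (use pol_pos pol_diff in auto)
  have Dd: "(\<Sum>i\<in>UNIV. \<Sum>j\<in>UNIV.
             (real (cnt2 x y i j) * fw i j (obs i (cnt1 x))) *\<^sub>R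
               grad (\<lambda>\<eta>. ln (pol \<eta> t i (obs i (cnt1 x)) j)) \<theta>) = (\<Sum>m\<in>UNIV. fm y m *\<^sub>R gm y m)" for y
    using count_sum[of x y "\<lambda>i j. fw i j (obs i (cnt1 x)) *\<^sub>R grad (\<lambda>\<eta>. ln (pol \<eta> t i (obs i (cnt1 x)) j)) \<theta>"]
    by (simp add: fm_def gm_def o'_def)
  have cr: "(\<Sum>y\<in>UNIV. jp y *\<^sub>R (fm y m *\<^sub>R gm y m')) = 0" if "m \<noteq> m'" for m m'
    unfolding jp_def fm_def gm_def
  proof (rule cross[OF that])
    show "(\<Sum>j\<in>UNIV. pol \<theta> t (x m') (o' m') j *\<^sub>R grad (\<lambda>\<eta>. ln (pol \<eta> t (x m') (o' m') j)) \<theta>) = 0"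
      by (rule score_zero[where p = "\<lambda>j \<eta>. pol \<eta> t (x m') (o' m') j"]) (use pol_pos pol_sum pol_diff in auto)
  qed
  have "(\<Sum>y\<in>UNIV. jp y *\<^sub>R ((\<Sum>m\<in>UNIV. fm y m) *\<^sub>R (\<Sum>m\<in>UNIV. gm y m)))
      = (\<Sum>y\<in>UNIV. \<Sum>m\<in>UNIV. \<Sum>m'\<in>UNIV. jp y *\<^sub>R (fm y m *\<^sub>R gm y m'))"
    by (intro sum.cong refl, simp add: scaleR_sum_left scaleR_sum_right, rule sum.swap)
  also have "\<dots> = (\<Sum>m\<in>UNIV. \<Sum>m'\<in>UNIV. \<Sum>y\<in>UNIV. jp y *\<^sub>R (fm y m *\<^sub>R gm y m'))"
    by (simp add: sum.swap[of _ "UNIV::('m\<Rightarrow>'a) set"])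
  also have "\<dots> = (\<Sum>m\<in>UNIV. \<Sum>m'\<in>UNIV. if m' = m then \<Sum>y\<in>UNIV. jp y *\<^sub>R (fm y m *\<^sub>R gm y m') else 0)"
    using cr by (intro sum.cong refl) auto
  also have "\<dots> = (\<Sum>m\<in>UNIV. \<Sum>y\<in>UNIV. jp y *\<^sub>R (fm y m *\<^sub>R gm y m))"
    by (simp add: sum.delta')
  also have "\<dots> = (\<Sum>y\<in>UNIV. jp y *\<^sub>R (\<Sum>m\<in>UNIV. fm y m *\<^sub>R gm y m))"
    by (simp add: scaleR_sum_right sum.swap[of _ "UNIV::('m\<Rightarrow>'a) set"])
  finally show ?thesis by (simp add: jpe F Gr Dd)
qed

lemma sum_prod_fun:
  fixes q :: "'m::finite \<Rightarrow> 'a::finite \<Rightarrow> 'c::comm_semiring_1"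
  shows "(\<Sum>z\<in>UNIV. \<Prod>m\<in>UNIV. q m (z m)) = (\<Prod>m\<in>UNIV. \<Sum>i\<in>UNIV. q m i)"
  using prod_sum_PiE[of "UNIV::'m set" "\<lambda>_. UNIV::'a set" q] by simp

lemma trajs_step:
  fixes F :: "(nat \<Rightarrow> 'm \<Rightarrow> 's) \<times> (nat \<Rightarrow> 'm \<Rightarrow> 'a) \<Rightarrow> 'v::comm_monoid_add"
  shows "(\<Sum>sa\<in>trajs (Suc n). F sa) =
    (\<Sum>sa\<in>trajs n. \<Sum>y\<in>UNIV. \<Sum>z\<in>UNIV. F ((fst sa)(Suc (Suc n) := z), (snd sa)(Suc n := y)))"
proof -
  let ?u = "\<lambda>(sa, y, z). ((fst sa)(Suc (Suc n) := z), (snd sa)(Suc n := y))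
     :: (nat \<Rightarrow> 'm \<Rightarrow> 's) \<times> (nat \<Rightarrow> 'm \<Rightarrow> 'a)"
  let ?v = "\<lambda>sa :: (nat \<Rightarrow> 'm \<Rightarrow> 's) \<times> (nat \<Rightarrow> 'm \<Rightarrow> 'a).
     (((fst sa)(Suc (Suc n) := undefined), (snd sa)(Suc n := undefined)), snd sa (Suc n), fst sa (Suc (Suc n)))"
  have b: "bij_betw ?u (trajs n \<times> UNIV \<times> UNIV) (trajs (Suc n))"
  proof (rule bij_betw_byWitness[where f' = ?v])
    show "\<forall>a\<in>trajs n \<times> UNIV \<times> UNIV. ?v (?u a) = a"
      by (auto simp: trajs_def PiE_def extensional_def)
    show "\<forall>a'\<in>trajs (Suc n). ?u (?v a') = a'"
      by (auto simp: trajs_def)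
    show "?u ` (trajs n \<times> UNIV \<times> UNIV) \<subseteq> trajs (Suc n)"
      by (auto simp: trajs_def PiE_def extensional_def)
    show "?v ` trajs (Suc n) \<subseteq> trajs n \<times> UNIV \<times> UNIV"
      by (auto simp: trajs_def PiE_def extensional_def)
  qed
  have "(\<Sum>sa\<in>trajs (Suc n). F sa) = (\<Sum>p\<in>trajs n \<times> UNIV \<times> UNIV. F (?u p))"
    using sum.reindex_bij_betw[OF b, of F] by simp
  also have "\<dots> = (\<Sum>sa\<in>trajs n. \<Sum>yz\<in>UNIV \<times> UNIV. F (?u (sa, yz)))"
    by (subst sum.cartesian_product) (simp add: split_def)
  also have "\<dots> = (\<Sum>sa\<in>trajs n. \<Sum>y\<in>UNIV. \<Sum>z\<in>UNIV. F ((fst sa)(Suc (Suc n) := z), (snd sa)(Suc n := y)))"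
  proof (rule sum.cong[OF refl])
    fix sa :: "(nat \<Rightarrow> 'm \<Rightarrow> 's) \<times> (nat \<Rightarrow> 'm \<Rightarrow> 'a)"
    show "(\<Sum>yz\<in>UNIV \<times> UNIV. F (?u (sa, yz))) = (\<Sum>y\<in>UNIV. \<Sum>z\<in>UNIV. F ((fst sa)(Suc (Suc n) := z), (snd sa)(Suc n := y)))"
      using sum.cartesian_product[of "\<lambda>y z. F ((fst sa)(Suc (Suc n) := z), (snd sa)(Suc n := y))" UNIV UNIV]
      by (simp add: split_def)
  qed
  finally show ?thesis .
qed

lemma trajprob_step:
  "trajprob (Suc n) b0 pol obs phi \<theta> ((fst sa)(Suc (Suc n) := z), (snd sa)(Suc n := y)) =
   trajprob n b0 pol obs phi \<theta> sa * jointpol pol obs \<theta> (Suc n) (fst sa (Suc n)) y *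
     (\<Prod>m\<in>UNIV. phi (Suc n) (fst sa (Suc n) m) (y m) (cnt1 (fst sa (Suc n))) (z m))"
proof -
  have e: "(\<Prod>t\<in>{1..n}. jointpol pol obs \<theta> t (((fst sa)(Suc (Suc n) := z)) t) (((snd sa)(Suc n := y)) t) *
                    (\<Prod>m\<in>UNIV. phi t (((fst sa)(Suc (Suc n) := z)) t m) (((snd sa)(Suc n := y)) t m)
                       (cnt1 (((fst sa)(Suc (Suc n) := z)) t)) (((fst sa)(Suc (Suc n) := z)) (Suc t) m)))
     = (\<Prod>t\<in>{1..n}. jointpol pol obs \<theta> t (fst sa t) (snd sa t) *
                    (\<Prod>m\<in>UNIV. phi t (fst sa t m) (snd sa t m) (cnt1 (fst sa t)) (fst sa (Suc t) m)))"
    by (intro prod.cong refl) auto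
  show ?thesis
    unfolding trajprob_def Let_def
    by (simp add: prod.nat_ivl_Suc' e mult_ac)
qed

lemma marg:
  fixes G :: "('m::finite \<Rightarrow> 's::finite) \<Rightarrow> ('m \<Rightarrow> 'a::finite) \<Rightarrow> 'v::real_vector"
    and pol :: "'p \<Rightarrow> nat \<Rightarrow> 's \<Rightarrow> 'o \<Rightarrow> 'a \<Rightarrow> real"
  assumes pol_sum: "\<And>t i ob. (\<Sum>j\<in>UNIV. pol \<theta> t i ob j) = 1"
    and phi_sum: "\<And>t i j n. (\<Sum>i'\<in>UNIV. phi t i j n i') = 1"
    and t1: "1 \<le> t" and tH: "t \<le> H"
  shows "(\<Sum>sa\<in>trajs H. trajprob H b0 pol obs phi \<theta> sa *\<^sub>R G (fst sa t) (snd sa t)) =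
    (\<Sum>sa\<in>trajs (t - 1). trajprob (t - 1) b0 pol obs phi \<theta> sa *\<^sub>R
        (\<Sum>y\<in>UNIV. jointpol pol obs \<theta> t (fst sa t) y *\<^sub>R G (fst sa t) y))"
  using tH
proof (induction H rule: dec_induct)
  have phi1: "(\<Sum>z\<in>UNIV. \<Prod>m\<in>UNIV. phi k (x m) (y m) c (z m)) = 1"
    for k and x :: "'m \<Rightarrow> 's" and y :: "'m \<Rightarrow> 'a" and c
    using sum_prod_fun[of "\<lambda>m i. phi k (x m) (y m) c i"] by (simp add: phi_sum)
  case base
  obtain n where tn: "t = Suc n" using t1 by (cases t) auto
  have "(\<Sum>sa\<in>trajs (Suc n). trajprob (Suc n) b0 pol obs phi \<theta> sa *\<^sub>R G (fst sa (Suc n)) (snd sa (Suc n)))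
     = (\<Sum>sa\<in>trajs n. \<Sum>y\<in>UNIV. \<Sum>z\<in>UNIV. (trajprob n b0 pol obs phi \<theta> sa * jointpol pol obs \<theta> (Suc n) (fst sa (Suc n)) y *
     (\<Prod>m\<in>UNIV. phi (Suc n) (fst sa (Suc n) m) (y m) (cnt1 (fst sa (Suc n))) (z m))) *\<^sub>R G (fst sa (Suc n)) y)"
    by (simp add: trajs_step trajprob_step)
  also have "\<dots> = (\<Sum>sa\<in>trajs n. \<Sum>y\<in>UNIV. (trajprob n b0 pol obs phi \<theta> sa * jointpol pol obs \<theta> (Suc n) (fst sa (Suc n)) y) *\<^sub>R G (fst sa (Suc n)) y)"
    by (simp add: scaleR_sum_left[symmetric] sum_distrib_left[symmetric] phi1)
  also have "\<dots> = (\<Sum>sa\<in>trajs n. trajprob n b0 pol obs phi \<theta> sa *\<^sub>R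
        (\<Sum>y\<in>UNIV. jointpol pol obs \<theta> (Suc n) (fst sa (Suc n)) y *\<^sub>R G (fst sa (Suc n)) y))"
    by (simp add: scaleR_sum_right)
  finally show ?case by (simp add: tn)
next
  have phi1: "(\<Sum>z\<in>UNIV. \<Prod>m\<in>UNIV. phi k (x m) (y m) c (z m)) = 1"
    for k and x :: "'m \<Rightarrow> 's" and y :: "'m \<Rightarrow> 'a" and c
    using sum_prod_fun[of "\<lambda>m i. phi k (x m) (y m) c i"] by (simp add: phi_sum)
  have jp1: "(\<Sum>y\<in>UNIV. jointpol pol obs \<theta> k x y) = 1" for k and x :: "'m \<Rightarrow> 's"
    unfolding jointpol_def using sum_prod_fun[of "\<lambda>m j. pol \<theta> k (x m) (obs (x m) (cnt1 x)) j"] by (simp add: pol_sum)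
  case (step n)
  have "(\<Sum>sa\<in>trajs (Suc n). trajprob (Suc n) b0 pol obs phi \<theta> sa *\<^sub>R G (fst sa t) (snd sa t))
     = (\<Sum>sa\<in>trajs n. \<Sum>y\<in>UNIV. \<Sum>z\<in>UNIV. (trajprob n b0 pol obs phi \<theta> sa * jointpol pol obs \<theta> (Suc n) (fst sa (Suc n)) y *
     (\<Prod>m\<in>UNIV. phi (Suc n) (fst sa (Suc n) m) (y m) (cnt1 (fst sa (Suc n))) (z m))) *\<^sub>R G (fst sa t) (snd sa t))"
    using step.hyps by (simp add: trajs_step trajprob_step)
  also have "\<dots> = (\<Sum>sa\<in>trajs n. \<Sum>y\<in>UNIV. (trajprob n b0 pol obs phi \<theta> sa * jointpol pol obs \<theta> (Suc n) (fst sa (Suc n)) y) *\<^sub>R G (fst sa t) (snd sa t))"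
    by (simp add: scaleR_sum_left[symmetric] sum_distrib_left[symmetric] phi1)
  also have "\<dots> = (\<Sum>sa\<in>trajs n. trajprob n b0 pol obs phi \<theta> sa *\<^sub>R G (fst sa t) (snd sa t))"
    by (simp add: scaleR_sum_left[symmetric] sum_distrib_left[symmetric] jp1)
  finally show ?case using step.IH by simp
qed

lemma card_fibers:
  fixes f :: "'m::finite \<Rightarrow> 'j::finite"
  shows "(\<Sum>j\<in>UNIV. card {m. P m \<and> f m = j}) = card {m. P m}"
proof -
  have "(\<Sum>j\<in>UNIV. \<Sum>x\<in>{x. x \<in> {m. P m} \<and> f x = j}. (1::nat)) = (\<Sum>x\<in>{m. P m}. 1)"
    by (rule sum.group) auto
  then show ?thesis by simp
qed

lemma finite_trajs: "finite (trajs H :: ((nat \<Rightarrow> 'm::finite \<Rightarrow> 's::finite) \<times> (nat \<Rightarrow> 'm \<Rightarrow> 'a::finite)) set)"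
  unfolding trajs_def by (intro finite_cartesian_product finite_PiE) auto

lemma counts_Omega:
  assumes "sa \<in> trajs H"
  shows "counts H (sa :: (nat \<Rightarrow> 'm::finite \<Rightarrow> 's::finite) \<times> (nat \<Rightarrow> 'm \<Rightarrow> 'a::finite)) \<in> Omega CARD('m) H"
proof -
  have a: "(\<Sum>i\<in>UNIV. cnt1 s i) = CARD('m)" for s :: "'m \<Rightarrow> 's"
    unfolding cnt1_def using card_fibers[of "\<lambda>_. True" s] by simp
  have b: "(\<Sum>j\<in>UNIV. cnt2 s a i j) = cnt1 s i" for s :: "'m \<Rightarrow> 's" and a :: "'m \<Rightarrow> 'a" and i
    unfolding cnt1_def cnt2_def by (rule card_fibers)
  have c: "(\<Sum>i'\<in>UNIV. cnt3 s a s' i j i') = cnt2 s a i j" for s s' :: "'m \<Rightarrow> 's" and a :: "'m \<Rightarrow> 'a" and i j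
    unfolding cnt3_def cnt2_def using card_fibers[of "\<lambda>m. s m = i \<and> a m = j" s'] by (simp add: conj_assoc)
  show ?thesis unfolding Omega_def counts_def using a b c by auto
qed

lemma Omega_finite: "finite (Omega M H :: (nat \<Rightarrow> ('s::finite,'a::finite) ctab) set)"
proof -
  define B :: "('s,'a) ctab set" where "B = (PiE UNIV (\<lambda>_. {..M})) \<times> (PiE UNIV (\<lambda>_. PiE UNIV (\<lambda>_. {..M}))) \<times>
      (PiE UNIV (\<lambda>_. PiE UNIV (\<lambda>_. PiE UNIV (\<lambda>_. {..M}))))"
  have fB: "finite B" unfolding B_def by (intro finite_cartesian_product finite_PiE) auto
  define ext where "ext f = (\<lambda>t. if t \<in> {1..H} then f t else zero_ctab)" for f :: "nat \<Rightarrow> ('s,'a) ctab"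
  have "Omega M H \<subseteq> ext ` PiE {1..H} (\<lambda>_. B)"
  proof
    fix N :: "nat \<Rightarrow> ('s,'a) ctab" assume N: "N \<in> Omega M H"
    have "N t \<in> B" if t: "t \<in> {1..H}" for t
    proof -
      have s1: "(\<Sum>i\<in>UNIV. fst (N t) i) = M"
        and s2: "\<And>i. (\<Sum>j\<in>UNIV. fst (snd (N t)) i j) = fst (N t) i"
        and s3: "\<And>i j. (\<Sum>i'\<in>UNIV. snd (snd (N t)) i j i') = fst (snd (N t)) i j"
        using N t unfolding Omega_def by auto
      have l1: "fst (N t) i \<le> M" for i
        using member_le_sum[of i UNIV "fst (N t)"] s1 by simp
      have l2: "fst (snd (N t)) i j \<le> M" for i j
        using member_le_sum[of j UNIV "fst (snd (N t)) i"] s2[of i] l1[of i] by simp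
      have l3: "snd (snd (N t)) i j k \<le> M" for i j k
        using member_le_sum[of k UNIV "snd (snd (N t)) i j"] s3[of i j] l2[of i j] by simp
      show ?thesis unfolding B_def using l1 l2 l3
        by (cases "N t") (auto simp: PiE_UNIV_domain)
    qed
    then have "restrict N {1..H} \<in> PiE {1..H} (\<lambda>_. B)" by auto
    moreover have "N = ext (restrict N {1..H})"
      using N unfolding ext_def Omega_def by auto
    ultimately show "N \<in> ext ` PiE {1..H} (\<lambda>_. B)" by blast
  qed
  moreover have "finite (ext ` PiE {1..H} (\<lambda>_. B))"
    using fB by (intro finite_imageI finite_PiE) auto
  ultimately show ?thesis by (rule finite_subset)
qed

theorem theorem3:
  fixes H :: nat
    and b0 :: "'s::finite \<Rightarrow> real"
    and pol :: "'p::euclidean_space \<Rightarrow> nat \<Rightarrow> 's \<Rightarrow> 'o \<Rightarrow> 'a::finite \<Rightarrow> real"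
    and obs :: "'s \<Rightarrow> ('s \<Rightarrow> nat) \<Rightarrow> 'o"
    and phi :: "nat \<Rightarrow> 's \<Rightarrow> 'a \<Rightarrow> ('s \<Rightarrow> nat) \<Rightarrow> 's \<Rightarrow> real"
    and fw :: "'s \<Rightarrow> 'a \<Rightarrow> 'o \<Rightarrow> real"
    and \<theta> :: 'p
    and agents :: "'m::finite itself"
  assumes b0_nonneg: "\<And>i. b0 i \<ge> 0"
    and b0_sum: "(\<Sum>i\<in>UNIV. b0 i) = 1"
    and pol_pos: "\<And>\<theta>' t i ob j. pol \<theta>' t i ob j > 0"
    and pol_sum: "\<And>\<theta>' t i ob. (\<Sum>j\<in>UNIV. pol \<theta>' t i ob j) = 1"
    and pol_diff: "\<And>\<theta>' t i ob j. (\<lambda>\<eta>. pol \<eta> t i ob j) differentiable (at \<theta>')"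
    and phi_nonneg: "\<And>t i j n i'. phi t i j n i' \<ge> 0"
    and phi_sum: "\<And>t i j n. (\<Sum>i'\<in>UNIV. phi t i j n i') = 1"
  shows
    "(\<Sum>t\<in>{1..H}. \<Sum>x\<in>(UNIV :: ('m \<Rightarrow> 's) set). \<Sum>y\<in>(UNIV :: ('m \<Rightarrow> 'a) set).
        margprob H b0 pol obs phi \<theta> t x y *\<^sub>R
          ((\<Sum>i\<in>UNIV. \<Sum>j\<in>UNIV. real (cnt2 x y i j) * fw i j (obs i (cnt1 x))) *\<^sub>R
             grad (\<lambda>\<eta>. ln (jointpol pol obs \<eta> t x y)) \<theta>))
     =
     (\<Sum>N\<in>Omega CARD('m) H.
        countprob H b0 pol obs phi \<theta> agents N *\<^sub>R
          (\<Sum>t\<in>{1..H}. \<Sum>i\<in>UNIV. \<Sum>j\<in>UNIV.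
             (real (fst (snd (N t)) i j) * fw i j (obs i (fst (N t)))) *\<^sub>R
               grad (\<lambda>\<eta>. ln (pol \<eta> t i (obs i (fst (N t))) j)) \<theta>))"
proof -
  define G where "G t x y = (\<Sum>i\<in>UNIV. \<Sum>j\<in>UNIV. real (cnt2 x y i j) * fw i j (obs i (cnt1 x))) *\<^sub>R
             grad (\<lambda>\<eta>. ln (jointpol pol obs \<eta> t x y)) \<theta>"
    for t and x :: "'m \<Rightarrow> 's" and y :: "'m \<Rightarrow> 'a"
  define D where "D t x y = (\<Sum>i\<in>UNIV. \<Sum>j\<in>UNIV.
             (real (cnt2 x y i j) * fw i j (obs i (cnt1 x))) *\<^sub>R
               grad (\<lambda>\<eta>. ln (pol \<eta> t i (obs i (cnt1 x)) j)) \<theta>)"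
    for t and x :: "'m \<Rightarrow> 's" and y :: "'m \<Rightarrow> 'a"
  define K where "K N = (\<Sum>t\<in>{1..H}. \<Sum>i\<in>UNIV. \<Sum>j\<in>UNIV.
             (real (fst (snd (N t)) i j) * fw i j (obs i (fst (N t)))) *\<^sub>R
               grad (\<lambda>\<eta>. ln (pol \<eta> t i (obs i (fst (N t))) j)) \<theta>)" for N :: "nat \<Rightarrow> ('s,'a) ctab"
  define tp :: "(nat \<Rightarrow> 'm \<Rightarrow> 's) \<times> (nat \<Rightarrow> 'm \<Rightarrow> 'a) \<Rightarrow> real" where "tp = trajprob H b0 pol obs phi \<theta>"
  let ?T = "trajs H :: ((nat \<Rightarrow> 'm \<Rightarrow> 's) \<times> (nat \<Rightarrow> 'm \<Rightarrow> 'a)) set"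
  have fT: "finite ?T" by (rule finite_trajs)
  have L1: "(\<Sum>x\<in>UNIV. \<Sum>y\<in>UNIV. margprob H b0 pol obs phi \<theta> t x y *\<^sub>R G t x y)
      = (\<Sum>sa\<in>?T. tp sa *\<^sub>R G t (fst sa t) (snd sa t))" for t
  proof -
    have "(\<Sum>sa\<in>?T. tp sa *\<^sub>R G t (fst sa t) (snd sa t))
       = (\<Sum>p\<in>UNIV. \<Sum>sa\<in>{sa. sa \<in> ?T \<and> (fst sa t, snd sa t) = p}. tp sa *\<^sub>R G t (fst sa t) (snd sa t))"
      by (rule sum.group[symmetric]) (auto simp: fT)
    also have "\<dots> = (\<Sum>p\<in>UNIV. \<Sum>sa\<in>{sa. sa \<in> ?T \<and> (fst sa t, snd sa t) = p}. tp sa *\<^sub>R G t (fst p) (snd p))"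
      by (intro sum.cong refl) auto
    also have "\<dots> = (\<Sum>p\<in>UNIV. margprob H b0 pol obs phi \<theta> t (fst p) (snd p) *\<^sub>R G t (fst p) (snd p))"
      unfolding margprob_def tp_def scaleR_sum_left
      by (intro sum.cong refl) (auto simp: prod_eq_iff)
    also have "\<dots> = (\<Sum>x\<in>UNIV. \<Sum>y\<in>UNIV. margprob H b0 pol obs phi \<theta> t x y *\<^sub>R G t x y)"
      by (simp add: sum.cartesian_product UNIV_Times_UNIV[symmetric] split_def del: UNIV_Times_UNIV)
    finally show ?thesis ..
  qed
  have L2: "(\<Sum>N\<in>Omega CARD('m) H. countprob H b0 pol obs phi \<theta> agents N *\<^sub>R K N)
      = (\<Sum>sa\<in>?T. tp sa *\<^sub>R K (counts H sa))"
  proof -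
    have "(\<Sum>sa\<in>?T. tp sa *\<^sub>R K (counts H sa))
       = (\<Sum>N\<in>Omega CARD('m) H. \<Sum>sa\<in>{sa. sa \<in> ?T \<and> counts H sa = N}. tp sa *\<^sub>R K (counts H sa))"
      by (rule sum.group[symmetric]) (auto simp: fT Omega_finite counts_Omega)
    also have "\<dots> = (\<Sum>N\<in>Omega CARD('m) H. countprob H b0 pol obs phi \<theta> agents N *\<^sub>R K N)"
      unfolding countprob_def tp_def scaleR_sum_left
      by (intro sum.cong refl) auto
    finally show ?thesis ..
  qed
  have L3: "K (counts H sa) = (\<Sum>t\<in>{1..H}. D t (fst sa t) (snd sa t))" for sa :: "(nat \<Rightarrow> 'm \<Rightarrow> 's) \<times> (nat \<Rightarrow> 'm \<Rightarrow> 'a)"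
    unfolding K_def D_def by (intro sum.cong refl) (simp add: counts_def)
  have L4: "(\<Sum>sa\<in>?T. tp sa *\<^sub>R G t (fst sa t) (snd sa t)) = (\<Sum>sa\<in>?T. tp sa *\<^sub>R D t (fst sa t) (snd sa t))"
    if t: "t \<in> {1..H}" for t
  proof -
    have le: "(\<Sum>y\<in>UNIV. jointpol pol obs \<theta> t x y *\<^sub>R G t x y) = (\<Sum>y\<in>UNIV. jointpol pol obs \<theta> t x y *\<^sub>R D t x y)" for x :: "'m \<Rightarrow> 's"
        unfolding G_def D_def by (rule local_eq) (use pol_pos pol_sum pol_diff in auto)
    have "(\<Sum>sa\<in>?T. tp sa *\<^sub>R G t (fst sa t) (snd sa t)) =
      (\<Sum>sa\<in>trajs (t - 1). trajprob (t - 1) b0 pol obs phi \<theta> sa *\<^sub>R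
        (\<Sum>y\<in>UNIV. jointpol pol obs \<theta> t (fst sa t) y *\<^sub>R G t (fst sa t) y))"
      unfolding tp_def by (rule marg) (use t pol_sum phi_sum in auto)
    also have "\<dots> = (\<Sum>sa\<in>trajs (t - 1). trajprob (t - 1) b0 pol obs phi \<theta> sa *\<^sub>R
        (\<Sum>y\<in>UNIV. jointpol pol obs \<theta> t (fst sa t) y *\<^sub>R D t (fst sa t) y))"
      by (simp only: le)
    also have "\<dots> = (\<Sum>sa\<in>?T. tp sa *\<^sub>R D t (fst sa t) (snd sa t))"
      unfolding tp_def by (rule marg[symmetric]) (use t pol_sum phi_sum in auto)
    finally show ?thesis .
  qed
  have "(\<Sum>t\<in>{1..H}. \<Sum>x\<in>UNIV. \<Sum>y\<in>UNIV. margprob H b0 pol obs phi \<theta> t x y *\<^sub>R G t x y)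
      = (\<Sum>t\<in>{1..H}. \<Sum>sa\<in>?T. tp sa *\<^sub>R D t (fst sa t) (snd sa t))"
    using L1 L4 by simp
  also have "\<dots> = (\<Sum>sa\<in>?T. tp sa *\<^sub>R K (counts H sa))"
    by (simp add: L3 scaleR_sum_right, rule sum.swap)
  also have "\<dots> = (\<Sum>N\<in>Omega CARD('m) H. countprob H b0 pol obs phi \<theta> agents N *\<^sub>R K N)"
    by (rule L2[symmetric])
  finally show ?thesis unfolding G_def K_def .
qed

end
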